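(* Let $k$ be a positive integer and let $G$ be a graph obtained from $K_4$ by subdividing its edges (each edge replaced by a path) such that, in a planar embedding of $G$, each of the four faces is a cycle of length $2k+1$. Then $G^{(2k-1)}$ is isomorphic to the complete graph $K_{4k}$.
   Context: For a graph $G$ and a positive integer $m$, the $m$-th walk-power $G^{(m)}$ is the graph with vertex set $V(G)$ in which two distinct vertices $x,y$ are adjacent if and only if there is a walk of length exactly $m$ in $G$ connecting $x$ and $y$. *)

theory Defs
  imports Main
begin

text \<open>Simple graphs are given by a vertex set V and a symmetric irreflexive
  adjacency relation E.\<close>

definition is_walk :: "('a \<Rightarrow> 'a \<Rightarrow> bool) \<Rightarrow> 'a list \<Rightarrow> bool" where
  "is_walk E xs \<longleftrightarrow> xs \<noteq> [] \<and> (\<forall>i. Suc i < length xs \<longrightarrow> E (xs ! i) (xs ! Suc i))"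

definition walk_power :: "'a set \<Rightarrow> ('a \<Rightarrow> 'a \<Rightarrow> bool) \<Rightarrow> nat \<Rightarrow> 'a \<Rightarrow> 'a \<Rightarrow> bool" where
  "walk_power V E m x y \<longleftrightarrow> x \<in> V \<and> y \<in> V \<and> x \<noteq> y \<and>
     (\<exists>xs. is_walk E xs \<and> length xs = Suc m \<and> hd xs = x \<and> last xs = y)"

definition graph_iso :: "'a set \<Rightarrow> ('a \<Rightarrow> 'a \<Rightarrow> bool) \<Rightarrow> 'b set \<Rightarrow> ('b \<Rightarrow> 'b \<Rightarrow> bool) \<Rightarrow> bool" where
  "graph_iso V1 E1 V2 E2 \<longleftrightarrow>
     (\<exists>f. bij_betw f V1 V2 \<and> (\<forall>x\<in>V1. \<forall>y\<in>V1. E1 x y \<longleftrightarrow> E2 (f x) (f y)))"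

definition K_V :: "nat \<Rightarrow> nat set" where "K_V n = {0..<n}"
definition K_E :: "nat \<Rightarrow> nat \<Rightarrow> bool" where "K_E x y \<longleftrightarrow> x \<noteq> y"

text \<open>Subdivision of K4 on branch vertices 0,1,2,3. For a < b < 4 the edge ab is
  replaced by a path of length l a b \<ge> 1; its interior vertices are Sub a b i,
  0 < i < l a b.\<close>
datatype sv = Br nat | Sub nat nat nat

definition pv :: "(nat \<Rightarrow> nat \<Rightarrow> nat) \<Rightarrow> nat \<Rightarrow> nat \<Rightarrow> nat \<Rightarrow> sv" where
  "pv l a b i = (if i = 0 then Br a else if i = l a b then Br b else Sub a b i)"

definition subdiv_V :: "(nat \<Rightarrow> nat \<Rightarrow> nat) \<Rightarrow> sv set" where
  "subdiv_V l = {Br a | a. a < 4} \<union> {Sub a b i | a b i. a < b \<and> b < 4 \<and> 0 < i \<and> i < l a b}"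

definition subdiv_E :: "(nat \<Rightarrow> nat \<Rightarrow> nat) \<Rightarrow> sv \<Rightarrow> sv \<Rightarrow> bool" where
  "subdiv_E l x y \<longleftrightarrow> (\<exists>a b i. a < b \<and> b < 4 \<and> i < l a b \<and>
      {x, y} = {pv l a b i, pv l a b (Suc i)})"

end

theory Submission
  imports Defs
begin


definition W :: "('a \<Rightarrow> 'a \<Rightarrow> bool) \<Rightarrow> nat \<Rightarrow> 'a \<Rightarrow> 'a \<Rightarrow> bool" where
  "W E d u v \<longleftrightarrow> (\<exists>xs. is_walk E xs \<and> length xs = Suc d \<and> hd xs = u \<and> last xs = v)"

lemma is_walk_single: "is_walk E [x]"
  by (simp add: is_walk_def)

lemma is_walk_Cons2: "is_walk E (x#y#xs) = (E x y \<and> is_walk E (y#xs))"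
  unfolding is_walk_def
proof safe
  assume h: "\<forall>i. Suc i < length (x # y # xs) \<longrightarrow> E ((x # y # xs) ! i) ((x # y # xs) ! Suc i)"
  show "E x y" using h[rule_format, of 0] by simp
next
  fix i assume h: "\<forall>i. Suc i < length (x # y # xs) \<longrightarrow> E ((x # y # xs) ! i) ((x # y # xs) ! Suc i)"
    "Suc i < length (y # xs)"
  show "E ((y # xs) ! i) ((y # xs) ! Suc i)"
    using h(1)[rule_format, of "Suc i"] h(2) by simp
next
  fix i assume "E x y" "\<forall>i. Suc i < length (y # xs) \<longrightarrow> E ((y # xs) ! i) ((y # xs) ! Suc i)"
    "Suc i < length (x # y # xs)"
  then show "E ((x # y # xs) ! i) ((x # y # xs) ! Suc i)"
    by (cases i) auto
qed

lemma W0: "W E 0 u u"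
  unfolding W_def by (rule exI[of _ "[u]"]) (simp add: is_walk_single)

lemma W0_eq: "W E 0 u v \<Longrightarrow> u = v"
  unfolding W_def by (auto simp: length_Suc_conv)

lemma Wcons: "E u w \<Longrightarrow> W E d w v \<Longrightarrow> W E (Suc d) u v"
  unfolding W_def
proof (elim exE conjE)
  fix xs assume h: "E u w" "is_walk E xs" "length xs = Suc d" "hd xs = w" "last xs = v"
  then obtain ys where xs: "xs = w # ys" by (cases xs) auto
  show "\<exists>xs. is_walk E xs \<and> length xs = Suc (Suc d) \<and> hd xs = u \<and> last xs = v"
    by (rule exI[of _ "u # xs"]) (use h xs in \<open>auto simp: is_walk_Cons2\<close>)
qed

lemma W_Suc_elim: "W E (Suc d) u v \<Longrightarrow> \<exists>w. E u w \<and> W E d w v"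
  unfolding W_def
proof (elim exE conjE)
  fix xs assume h: "is_walk E xs" "length xs = Suc (Suc d)" "hd xs = u" "last xs = v"
  then obtain w ys where xs: "xs = u # w # ys"
    by (cases xs; cases "tl xs") auto
  show "\<exists>w. E u w \<and> (\<exists>xs. is_walk E xs \<and> length xs = Suc d \<and> hd xs = w \<and> last xs = v)"
    using h xs by (intro exI[of _ w] conjI exI[of _ "w#ys"]) (auto simp: is_walk_Cons2)
qed

lemma W_trans: "W E d1 u v \<Longrightarrow> W E d2 v w \<Longrightarrow> W E (d1 + d2) u w"
proof (induction d1 arbitrary: u)
  case 0 then show ?case using W0_eq by fastforce
next
  case (Suc d1)
  then obtain x where "E u x" "W E d1 x v" using W_Suc_elim by metis
  then show ?case using Suc Wcons by fastforce
qed

lemma W_edge: "E u v \<Longrightarrow> W E 1 u v"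
  using Wcons[OF _ W0] by fastforce

lemma W_sym: assumes "\<And>x y. E x y \<Longrightarrow> E y x" shows "W E d u v \<Longrightarrow> W E d v u"
proof (induction d arbitrary: u)
  case 0 then show ?case using W0_eq W0 by metis
next
  case (Suc d)
  then obtain x where "E u x" "W E d x v" using W_Suc_elim by metis
  then have "W E d v x" "W E 1 x u" using Suc.IH assms W_edge[of E] by auto
  then show ?case using W_trans by fastforce
qed

lemma W_pad: assumes "\<And>x y. E x y \<Longrightarrow> E y x" "E v w" shows "W E d u v \<Longrightarrow> W E (d + 2*t) u v"
proof (induction t)
  case 0 then show ?case by simp
next
  case (Suc t)
  have "W E (1+1) v v" using W_trans[OF W_edge[of E, OF assms(2)] W_edge[of E, OF assms(1)[OF assms(2)]]] by simp
  from W_trans[OF Suc.IH[OF Suc.prems] this] show ?case by (simp add: algebra_simps)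
qed




definition LL :: "(nat \<Rightarrow> nat \<Rightarrow> nat) \<Rightarrow> nat \<Rightarrow> nat \<Rightarrow> nat" where
  "LL l p q = (if p < q then l p q else l q p)"
definition PP :: "(nat \<Rightarrow> nat \<Rightarrow> nat) \<Rightarrow> nat \<Rightarrow> nat \<Rightarrow> nat \<Rightarrow> sv" where
  "PP l p q i = (if p < q then pv l p q i else pv l q p (l q p - i))"

lemma E_sym: "subdiv_E l x y \<Longrightarrow> subdiv_E l y x"
  unfolding subdiv_E_def by (metis insert_commute)

locale sk =
  fixes k :: nat and l :: "nat \<Rightarrow> nat \<Rightarrow> nat"
  assumes kpos: "0 < k"
    and l1: "\<forall>a b. a < b \<and> b < 4 \<longrightarrow> 1 \<le> l a b"
    and tri: "\<forall>a b c. a < b \<and> b < c \<and> c < 4 \<longrightarrow> l a b + l b c + l a c = 2 * k + 1"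
begin

abbreviation "E \<equiv> subdiv_E l"
abbreviation "V \<equiv> subdiv_V l"
abbreviation "L \<equiv> LL l"
abbreviation "P \<equiv> PP l"

lemma four: "(p::nat) < 4 \<Longrightarrow> p = 0 \<or> p = 1 \<or> p = 2 \<or> p = 3" by auto

lemma L_pos: "p \<noteq> q \<Longrightarrow> p < 4 \<Longrightarrow> q < 4 \<Longrightarrow> 1 \<le> L p q"
  using l1 unfolding LL_def by (cases "p < q") auto

lemma L_comm: "L p q = L q p"
  unfolding LL_def by (cases "p < q"; cases "q < p") auto

lemma opp: "l 2 3 = l 0 1" "l 1 3 = l 0 2" "l 1 2 = l 0 3"
proof -
  have "l 0 1 + l 1 2 + l 0 2 = 2*k+1" "l 0 1 + l 1 3 + l 0 3 = 2*k+1"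
    "l 0 2 + l 2 3 + l 0 3 = 2*k+1" "l 1 2 + l 2 3 + l 1 3 = 2*k+1"
    using tri by auto
  then show "l 2 3 = l 0 1" "l 1 3 = l 0 2" "l 1 2 = l 0 3" by linarith+
qed

lemma trisum: "l 0 1 + l 0 2 + l 0 3 = 2*k+1"
  using tri[rule_format, of 0 1 2] opp by simp

lemma L_tri: assumes "p < 4" "q < 4" "r < 4" "p \<noteq> q" "q \<noteq> r" "p \<noteq> r" shows
  "L p q + L q r + L p r = 2*k+1"
  using assms trisum opp
  by (insert four[OF assms(1)] four[OF assms(2)] four[OF assms(3)], elim disjE, simp_all add: LL_def)

lemma L_opp: assumes "p < 4" "q < 4" "r < 4" "s < 4" "distinct [p,q,r,s]" shows
  "L r s = L p q \<and> L q s = L p r \<and> L q r = L p s"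
  using assms opp
  by (insert four[OF assms(1)] four[OF assms(2)] four[OF assms(3)] four[OF assms(4)], elim disjE, simp_all add: LL_def)

lemma P_flip: "p \<noteq> q \<Longrightarrow> i \<le> L p q \<Longrightarrow> P q p (L p q - i) = P p q i"
  unfolding PP_def LL_def by (cases "p < q") auto

lemma P0: "p \<noteq> q \<Longrightarrow> p < 4 \<Longrightarrow> q < 4 \<Longrightarrow> P p q 0 = Br p"
  using L_pos[of p q] unfolding PP_def LL_def pv_def by (cases "p < q") auto

lemma PL: "p \<noteq> q \<Longrightarrow> p < 4 \<Longrightarrow> q < 4 \<Longrightarrow> P p q (L p q) = Br q"
  using L_pos[of p q] unfolding PP_def LL_def pv_def by (cases "p < q") auto

lemma P_in: "p \<noteq> q \<Longrightarrow> p < 4 \<Longrightarrow> q < 4 \<Longrightarrow> i \<le> L p q \<Longrightarrow> P p q i \<in> V"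
  unfolding PP_def LL_def pv_def subdiv_V_def
  by (cases "p < q") auto

lemma P_edge: "p \<noteq> q \<Longrightarrow> p < 4 \<Longrightarrow> q < 4 \<Longrightarrow> i < L p q \<Longrightarrow> E (P p q i) (P p q (Suc i))"
proof (cases "p < q")
  case True
  assume "i < L p q" "q < 4"
  then show ?thesis using True unfolding PP_def LL_def subdiv_E_def by auto
next
  case False
  assume "p \<noteq> q" "i < L p q" "p < 4"
  then have qp: "q < p" "i < l q p" using False unfolding LL_def by auto
  obtain j where j: "l q p - i = Suc j" "l q p - Suc i = j" "j < l q p" using qp
    by (intro that[of "l q p - Suc i"]) auto
  have "P p q i = pv l q p (Suc j)" "P p q (Suc i) = pv l q p j"
    using qp j unfolding PP_def by auto
  moreover have "E (pv l q p (Suc j)) (pv l q p j)"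
    unfolding subdiv_E_def using qp \<open>p < 4\<close> j by (intro exI[of _ q] exI[of _ p] exI[of _ j]) (auto simp: insert_commute)
  ultimately show ?thesis by simp
qed

lemma P_path: "p \<noteq> q \<Longrightarrow> p < 4 \<Longrightarrow> q < 4 \<Longrightarrow> i \<le> j \<Longrightarrow> j \<le> L p q \<Longrightarrow> W E (j - i) (P p q i) (P p q j)"
proof (induction j)
  case 0 then show ?case using W0 by simp
next
  case (Suc j)
  show ?case
  proof (cases "i = Suc j")
    case True then show ?thesis using W0 by simp
  next
    case False
    then have "W E (j - i) (P p q i) (P p q j)" using Suc by auto
    moreover have "W E 1 (P p q j) (P p q (Suc j))" using Suc P_edge W_edge[of E] by auto
    ultimately show ?thesis using W_trans False Suc.prems
      by (metis Suc_diff_le Suc_eq_plus1 le_SucE)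
  qed
qed

lemma W_symE: "W E d u v \<Longrightarrow> W E d v u"
  using W_sym[of E] E_sym by blast

lemma P_path': "p \<noteq> q \<Longrightarrow> p < 4 \<Longrightarrow> q < 4 \<Longrightarrow> i \<le> j \<Longrightarrow> j \<le> L p q \<Longrightarrow> W E (j - i) (P p q j) (P p q i)"
  using P_path W_symE by blast

lemma Br_path: "p \<noteq> q \<Longrightarrow> p < 4 \<Longrightarrow> q < 4 \<Longrightarrow> W E (L p q) (Br p) (Br q)"
  using P_path[of p q 0 "L p q"] P0 PL by auto

lemma to_Br: "p \<noteq> q \<Longrightarrow> p < 4 \<Longrightarrow> q < 4 \<Longrightarrow> i \<le> L p q \<Longrightarrow> W E i (P p q i) (Br p)"
  using P_path'[of p q 0 i] P0 by auto

lemma to_Br2: "p \<noteq> q \<Longrightarrow> p < 4 \<Longrightarrow> q < 4 \<Longrightarrow> i \<le> L p q \<Longrightarrow> W E (L p q - i) (P p q i) (Br q)"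
  using P_path[of p q i "L p q"] PL by auto

lemma neighbor: "p \<noteq> q \<Longrightarrow> p < 4 \<Longrightarrow> q < 4 \<Longrightarrow> i \<le> L p q \<Longrightarrow> \<exists>w. E (P p q i) w"
proof (cases "i < L p q")
  case True
  assume "p \<noteq> q" "p < 4" "q < 4" then show ?thesis using P_edge True by blast
next
  case False
  assume a: "p \<noteq> q" "p < 4" "q < 4" "i \<le> L p q"
  then have "i = Suc (i - 1)" "i - 1 < L p q" using False L_pos[of p q] by auto
  then show ?thesis using P_edge[OF a(1-3), of "i-1"] E_sym by metis
qed

lemma cover: "v \<in> V \<Longrightarrow> \<exists>p q i. p \<noteq> q \<and> p < 4 \<and> q < 4 \<and> i \<le> L p q \<and> v = P p q i"
  unfolding subdiv_V_def
proof (elim UnE CollectE exE conjE)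
  fix a assume "v = Br a" "a < 4"
  then show ?thesis
  proof (cases "a = 0")
    case True then show ?thesis using P0[of 0 1] \<open>v = Br a\<close> by (intro exI[of _ 0] exI[of _ 1] exI[of _ 0]) auto
  next
    case False then show ?thesis using P0[of a 0] \<open>v = Br a\<close> \<open>a < 4\<close> by (intro exI[of _ a] exI[of _ 0] exI[of _ 0]) auto
  qed
next
  fix a b i assume "v = Sub a b i" "a < b" "b < 4" "0 < i" "i < l a b"
  then show ?thesis by (intro exI[of _ a] exI[of _ b] exI[of _ i]) (auto simp: LL_def PP_def pv_def)
qed

definition Good :: "sv \<Rightarrow> sv \<Rightarrow> bool" where
  "Good u v \<longleftrightarrow> (\<exists>d. W E d u v \<and> odd d \<and> d \<le> 2*k - 1)"

lemma Good_sym: "Good u v \<Longrightarrow> Good v u"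
  unfolding Good_def using W_symE by blast

lemma two_walks: "W E d1 u v \<Longrightarrow> W E d2 u v \<Longrightarrow> d1 + d2 = 2*k+1 \<Longrightarrow> u \<noteq> v \<Longrightarrow> Good u v"
  unfolding Good_def
proof -
  assume a: "W E d1 u v" "W E d2 u v" "d1 + d2 = 2*k+1" "u \<noteq> v"
  have "d1 \<noteq> 0"
  proof
    assume "d1 = 0" then have "W E 0 u v" using a(1) by simp
    then show False using a(4) W0_eq[of E u v] by blast
  qed
  have "d2 \<noteq> 0"
  proof
    assume "d2 = 0" then have "W E 0 u v" using a(2) by simp
    then show False using a(4) W0_eq[of E u v] by blast
  qed
  show "\<exists>d. W E d u v \<and> odd d \<and> d \<le> 2*k - 1"
  proof (cases "odd d1")
    case True then show ?thesis using a \<open>d2 \<noteq> 0\<close> by (intro exI[of _ d1]) presburger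
  next
    case False then show ?thesis using a \<open>d1 \<noteq> 0\<close> by (intro exI[of _ d2]) presburger
  qed
qed

end


context sk begin

lemma third: "(p::nat) < 4 \<Longrightarrow> q < 4 \<Longrightarrow> \<exists>r::nat. r < 4 \<and> r \<noteq> p \<and> r \<noteq> q"
  by (rule exI[of _ "if p \<noteq> 0 \<and> q \<noteq> 0 then 0 else if p \<noteq> 1 \<and> q \<noteq> 1 then 1 else 2"]) auto

lemma triangle:
  assumes "p < 4" "q < 4" "r < 4" "p \<noteq> q" "q \<noteq> r" "p \<noteq> r" "i \<le> L p q" "j \<le> L p r"
    "P p q i \<noteq> P p r j"
  shows "Good (P p q i) (P p r j)"
proof -
  have w1: "W E (i + j) (P p q i) (P p r j)"
    using W_trans[OF to_Br[of p q i] W_symE[OF to_Br[of p r j]]] assms by auto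
  have w2: "W E ((L p q - i) + L q r + (L p r - j)) (P p q i) (P p r j)"
    using W_trans[OF W_trans[OF to_Br2[of p q i] Br_path[of q r]] W_symE[OF to_Br2[of p r j]]] assms by auto
  show ?thesis
    by (rule two_walks[OF w1 w2]) (use assms L_tri[of p q r] in auto)
qed

lemma samepath:
  assumes "p < 4" "q < 4" "p \<noteq> q" "i \<le> j" "j \<le> L p q" "P p q i \<noteq> P p q j"
  shows "Good (P p q i) (P p q j)"
proof -
  obtain r where r: "r < 4" "r \<noteq> p" "r \<noteq> q" using third assms by blast
  have w1: "W E (j - i) (P p q i) (P p q j)" using P_path assms by auto
  have w2: "W E (i + L p r + L r q + (L p q - j)) (P p q i) (P p q j)"
    using W_trans[OF W_trans[OF W_trans[OF to_Br[of p q i] Br_path[of p r]] Br_path[of r q]] W_symE[OF to_Br2[of p q j]]] assms r by auto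
  show ?thesis
    by (rule two_walks[OF w1 w2]) (use assms r L_tri[of p q r] L_comm[of r q] in auto)
qed

lemma oddle: "odd (n::nat) \<Longrightarrow> n \<le> 2*k \<Longrightarrow> n \<le> 2*k-1" by presburger
lemma odd_pair: "m + n = 2*(c::nat) \<Longrightarrow> odd m \<Longrightarrow> odd n"
  by (metis even_add even_mult_iff even_numeral)
lemma arith4': assumes "i + a = (X::nat)" "j + b = X" "X+Y+Z = 2*k+1" "1 \<le> Y" "1 \<le> Z"
  shows "(odd (i+Y+j) \<and> i+Y+j \<le> 2*k-1) \<or> (odd (i+Z+b) \<and> i+Z+b \<le> 2*k-1) \<or>
  (odd (a+Z+j) \<and> a+Z+j \<le> 2*k-1) \<or> (odd (a+Y+b) \<and> a+Y+b \<le> 2*k-1)"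
proof (cases "odd (i+Y+j)")
  case True
  have s: "(i+Y+j) + (a+Y+b) = 2*(X+Y)" using assms by simp
  have o: "odd (a+Y+b)" using odd_pair[OF s True] .
  have "i+Y+j \<le> 2*k \<or> a+Y+b \<le> 2*k" using s assms by linarith
  then show ?thesis using oddle True o by blast
next
  case False
  have s0: "(i+Y+j) + (i+Z+b) = 2*i + (2*k+1)" using assms by simp
  have o1: "odd (i+Z+b)" using s0 False by (metis even_add even_mult_iff odd_one even_numeral)
  have s: "(i+Z+b) + (a+Z+j) = 2*(X+Z)" using assms by simp
  have o: "odd (a+Z+j)" using odd_pair[OF s o1] .
  have "i+Z+b \<le> 2*k \<or> a+Z+j \<le> 2*k" using s assms by linarith
  then show ?thesis using oddle o1 o by blast
qed

lemma opposite:
  assumes "p < 4" "q < 4" "r < 4" "s < 4" "distinct [p,q,r,s]" "i \<le> L p q" "j \<le> L r s"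
  shows "Good (P p q i) (P r s j)"
proof -
  have Ls: "L r s = L p q" "L q s = L p r" "L q r = L p s" using L_opp assms by blast+
  have d: "p \<noteq> q" "p \<noteq> r" "p \<noteq> s" "q \<noteq> r" "q \<noteq> s" "r \<noteq> s" using assms(5) by auto
  have w1: "W E (i + L p r + j) (P p q i) (P r s j)"
    using W_trans[OF W_trans[OF to_Br[of p q i] Br_path[of p r]] W_symE[OF to_Br[of r s j]]] assms d by auto
  have w2: "W E (i + L p s + (L r s - j)) (P p q i) (P r s j)"
    using W_trans[OF W_trans[OF to_Br[of p q i] Br_path[of p s]] W_symE[OF to_Br2[of r s j]]] assms d by auto
  have w3: "W E ((L p q - i) + L q r + j) (P p q i) (P r s j)"
    using W_trans[OF W_trans[OF to_Br2[of p q i] Br_path[of q r]] W_symE[OF to_Br[of r s j]]] assms d by auto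
  have w4: "W E ((L p q - i) + L q s + (L r s - j)) (P p q i) (P r s j)"
    using W_trans[OF W_trans[OF to_Br2[of p q i] Br_path[of q s]] W_symE[OF to_Br2[of r s j]]] assms d by auto
  have sum: "L p q + L p r + L p s = 2*k+1" using L_tri[of p q r] assms d Ls by auto
  have jj: "j \<le> L p q" using assms Ls by simp
  have Y: "1 \<le> L p r" "1 \<le> L p s" using L_pos assms d by auto
  have A: "(odd (i+L p r+j) \<and> i+L p r+j \<le> 2*k-1) \<or> (odd (i+L p s+(L p q - j)) \<and> i+L p s+(L p q - j) \<le> 2*k-1) \<or>
  (odd ((L p q - i)+L p s+j) \<and> (L p q - i)+L p s+j \<le> 2*k-1) \<or> (odd ((L p q - i)+L p r+(L p q - j)) \<and> (L p q - i)+L p r+(L p q - j) \<le> 2*k-1)"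
    by (rule arith4') (use assms jj sum Y in auto)
  note w2' = w2[unfolded Ls] and w3' = w3[unfolded Ls] and w4' = w4[unfolded Ls]
  show ?thesis unfolding Good_def
    using A by (elim disjE) (use w1 w2' w3' w4' in blast)+
qed

lemma all_good: assumes "u \<in> V" "v \<in> V" "u \<noteq> v" shows "Good u v"
proof -
  obtain p q i where u: "p \<noteq> q" "p < 4" "q < 4" "i \<le> L p q" "u = P p q i" using cover assms by blast
  obtain r s j where v: "r \<noteq> s" "r < 4" "s < 4" "j \<le> L r s" "v = P r s j" using cover assms by blast
  have fl: "\<And>a b m. a \<noteq> b \<Longrightarrow> m \<le> L a b \<Longrightarrow> P a b m = P b a (L b a - m) \<and> L b a - m \<le> L b a"
    using P_flip L_comm by (metis diff_le_self)
  have same: "Good (P a b m) (P a b m')" if "a < 4" "b < 4" "a \<noteq> b" "m \<le> L a b" "m' \<le> L a b"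
    "P a b m \<noteq> P a b m'" for a b m m'
  proof (cases "m \<le> m'")
    case True then show ?thesis using samepath that by blast
  next
    case False then show ?thesis using samepath[of a b m' m] that Good_sym by auto
  qed
  consider "p = r" "q = s" | "p = s" "q = r" | "p = r" "q \<noteq> s" | "p = s" "q \<noteq> r"
    | "q = r" "p \<noteq> s" | "q = s" "p \<noteq> r" | "distinct [p,q,r,s]"
    using u v by auto
  then show ?thesis
  proof cases
    case 1 then show ?thesis using same u v assms by auto
  next
    case 2
    then have "v = P p q (L q p - j)" "L q p - j \<le> L p q" using fl[of r s j] v L_comm by auto
    then show ?thesis using same u v assms by auto
  next
    case 3 then show ?thesis using triangle[of p q s i j] u v assms by auto
  next
    case 4
    then have "v = P p r (L s r - j)" "L s r - j \<le> L p r" using fl[of r s j] v L_comm by auto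
    then show ?thesis using triangle[of p q r i "L s r - j"] u v assms 4 by auto
  next
    case 5
    then have "u = P q p (L q p - i)" "L q p - i \<le> L q p" using fl[of p q i] u by auto
    then show ?thesis using triangle[of q p s "L q p - i" j] u v assms 5 by auto
  next
    case 6
    then have "u = P q p (L q p - i)" "L q p - i \<le> L q p" using fl[of p q i] u by auto
    moreover have "v = P q r (L s r - j)" "L s r - j \<le> L q r" using fl[of r s j] v L_comm 6 by auto
    ultimately show ?thesis using triangle[of q p r "L q p - i" "L s r - j"] u v assms 6 by auto
  next
    case 7 then show ?thesis using opposite u v by auto
  qed
qed

end


context sk begin

definition Pairs :: "(nat \<times> nat) set" where "Pairs = {(0,1),(0,2),(0,3),(1,2),(1,3),(2,3)}"

lemma pair_mem: "(a::nat) < b \<Longrightarrow> b < 4 \<Longrightarrow> (a, b) \<in> Pairs"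
  unfolding Pairs_def by (insert four[of a] four[of b], auto)

lemma S_eq: "{Sub a b i | a b i. a < b \<and> b < 4 \<and> 0 < i \<and> i < l a b} =
  (\<lambda>(ab,i). Sub (fst ab) (snd ab) i) ` (SIGMA ab:Pairs. {0<..<l (fst ab) (snd ab)})"
proof
  show "{Sub a b i | a b i. a < b \<and> b < 4 \<and> 0 < i \<and> i < l a b} \<subseteq>
    (\<lambda>(ab,i). Sub (fst ab) (snd ab) i) ` (SIGMA ab:Pairs. {0<..<l (fst ab) (snd ab)})"
  proof
    fix x assume "x \<in> {Sub a b i | a b i. a < b \<and> b < 4 \<and> 0 < i \<and> i < l a b}"
    then obtain a b i where h: "x = Sub a b i" "a < b" "b < 4" "0 < i" "i < l a b" by blast
    then have "((a,b),i) \<in> (SIGMA ab:Pairs. {0<..<l (fst ab) (snd ab)})" using pair_mem by auto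
    then show "x \<in> (\<lambda>(ab,i). Sub (fst ab) (snd ab) i) ` (SIGMA ab:Pairs. {0<..<l (fst ab) (snd ab)})"
      using h by force
  qed
next
  show "(\<lambda>(ab,i). Sub (fst ab) (snd ab) i) ` (SIGMA ab:Pairs. {0<..<l (fst ab) (snd ab)}) \<subseteq>
    {Sub a b i | a b i. a < b \<and> b < 4 \<and> 0 < i \<and> i < l a b}"
    unfolding Pairs_def by auto
qed

lemma card_S: "card {Sub a b i | a b i. a < b \<and> b < 4 \<and> 0 < i \<and> i < l a b} = 4*k - 4"
proof -
  have inj: "inj_on (\<lambda>(ab,i). Sub (fst ab) (snd ab) i) (SIGMA ab:Pairs. {0<..<l (fst ab) (snd ab)})"
    by (auto simp: inj_on_def)
  have "card (SIGMA ab:Pairs. {0<..<l (fst ab) (snd ab)}) = (\<Sum>ab\<in>Pairs. l (fst ab) (snd ab) - 1)"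
    by (subst card_SigmaI) (auto simp: Pairs_def)
  also have "\<dots> = (l 0 1 - 1) + (l 0 2 - 1) + (l 0 3 - 1) + (l 1 2 - 1) + (l 1 3 - 1) + (l 2 3 - 1)"
    unfolding Pairs_def by simp
  also have "\<dots> = 4*k - 4"
    using opp trisum l1[rule_format, of 0 1] l1[rule_format, of 0 2] l1[rule_format, of 0 3] by simp
  finally show ?thesis unfolding S_eq using card_image[OF inj] by simp
qed

lemma fin_S: "finite {Sub a b i | a b i. a < b \<and> b < 4 \<and> 0 < i \<and> i < l a b}"
  unfolding S_eq Pairs_def by auto

lemma card_V: "card V = 4*k" and fin_V: "finite V"
proof -
  have V: "V = Br ` {0..<4} \<union> {Sub a b i | a b i. a < b \<and> b < 4 \<and> 0 < i \<and> i < l a b}"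
    unfolding subdiv_V_def by auto
  have c: "card (Br ` {0..<4::nat}) = 4" by (subst card_image) (auto simp: inj_on_def)
  have dj: "Br ` {0..<4} \<inter> {Sub a b i | a b i. a < b \<and> b < 4 \<and> 0 < i \<and> i < l a b} = {}" by auto
  show "finite V" unfolding V using fin_S by auto
  show "card V = 4*k" unfolding V using card_Un_disjoint[OF _ fin_S dj] c card_S kpos by simp
qed

lemma main: "graph_iso V (walk_power V E (2 * k - 1)) (K_V (4 * k)) K_E"
proof -
  obtain f where f: "bij_betw f V {0..<4*k}"
    using finite_same_card_bij[OF fin_V, of "{0..<4*k}"] card_V by auto
  have "walk_power V E (2 * k - 1) x y \<longleftrightarrow> K_E (f x) (f y)" if xy: "x \<in> V" "y \<in> V" for x y
  proof (cases "x = y")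
    case True then show ?thesis by (simp add: walk_power_def K_E_def)
  next
    case False
    then have fxy: "f x \<noteq> f y" using f xy by (metis bij_betw_inv_into_left)
    obtain d where d: "W E d x y" "odd d" "d \<le> 2*k - 1" using all_good[OF xy False] unfolding Good_def by blast
    obtain p q i where y: "p \<noteq> q" "p < 4" "q < 4" "i \<le> L p q" "y = P p q i" using cover xy by blast
    obtain w where "E y w" using neighbor y by blast
    obtain m where m: "d = 2*m+1" using d(2) oddE by blast
    have "W E (d + 2 * (k - 1 - m)) x y" using W_pad[of E y w, OF E_sym \<open>E y w\<close> d(1)] by blast
    moreover have "d + 2 * (k - 1 - m) = 2*k - 1" using d(3) m kpos by linarith
    ultimately have "W E (2*k - 1) x y" by simp
    then show ?thesis using xy False fxy unfolding walk_power_def K_E_def W_def by auto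
  qed
  then show ?thesis unfolding graph_iso_def K_V_def using f by blast
qed

end


theorem lemma1:
  fixes k :: nat and l :: "nat \<Rightarrow> nat \<Rightarrow> nat"
  assumes "0 < k"
    and "\<forall>a b. a < b \<and> b < 4 \<longrightarrow> 1 \<le> l a b"
    and "\<forall>a b c. a < b \<and> b < c \<and> c < 4 \<longrightarrow> l a b + l b c + l a c = 2 * k + 1"
  shows "graph_iso (subdiv_V l) (walk_power (subdiv_V l) (subdiv_E l) (2 * k - 1))
           (K_V (4 * k)) K_E"
proof -
  interpret sk k l using assms by unfold_locales
  show ?thesis using main .
qed

end
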